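(* Let $W(\omega_1)$ be the space of all countable ordinals with the order topology. If $Y$ is an infinite Tychonoff space of countable weight that is a continuous image of $W(\omega_1)$, then $Y$ is not homogeneous.
   Context: A space $Y$ is homogeneous if for any $y,z\in Y$ there is a homeomorphism of $Y$ onto itself mapping $y$ to $z$. *)

theory Defs
  imports "HOL-Analysis.Analysis"
begin

definition homogeneous_space :: "'a topology \<Rightarrow> bool" where
  "homogeneous_space Y \<longleftrightarrow>
     (\<forall>y\<in>topspace Y. \<forall>z\<in>topspace Y. \<exists>h. homeomorphic_map Y Y h \<and> h y = z)"

definition tychonoff_space :: "'a topology \<Rightarrow> bool" where
  "tychonoff_space Y \<longleftrightarrow> completely_regular_space Y \<and> t1_space Y"

end

theory Submission imports Defs begin

lemma bound_countable:
  fixes S :: "'a::{wellorder,linorder_topology} set"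
  assumes unc: "uncountable (UNIV :: 'a set)" and seg: "\<And>x::'a. countable {..<x}"
    and "countable S"
  shows "\<exists>b. \<forall>x\<in>S. x < b"
proof -
  have "countable (\<Union>x\<in>S. {..x})"
  proof (rule countable_UN[OF assms(3)])
    fix x assume "x \<in> S"
    have "{..x} = insert x {..<x}" by auto
    then show "countable {..x}" using seg[of x] by simp
  qed
  then have "(\<Union>x\<in>S. {..x}) \<noteq> UNIV" using unc by auto
  then obtain b where "b \<notin> (\<Union>x\<in>S. {..x})" by auto
  then show ?thesis by (auto simp: not_le)
qed

lemma club_meet:
  fixes C D :: "'a::{wellorder,linorder_topology} set"
  assumes unc: "uncountable (UNIV :: 'a set)" and seg: "\<And>x::'a. countable {..<x}"
    and cC: "closed C" and cD: "closed D"
    and uC: "\<And>x. \<exists>y\<in>C. x < y" and uD: "\<And>x. \<exists>y\<in>D. x < y"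
  shows "C \<inter> D \<noteq> {}"
proof
  assume disj: "C \<inter> D = {}"
  define P where "P = (\<lambda>n::nat. if even n then C else D)"
  have uP: "\<And>n x. \<exists>y\<in>P n. x < y" using uC uD by (simp add: P_def)
  obtain c0 where c0: "c0 \<in> C" using uC by blast
  have "\<exists>g. \<forall>n. g n \<in> P n \<and> g n < g (Suc n)"
  proof (rule dependent_nat_choice)
    show "\<exists>x. x \<in> P 0" using c0 by (auto simp: P_def)
    fix x n assume "x \<in> P n"
    show "\<exists>y. y \<in> P (Suc n) \<and> x < y" using uP[of "Suc n" x] by blast
  qed
  then obtain g where gP: "\<And>n. g n \<in> P n" and gs: "\<And>n. g n < g (Suc n)" by blast
  have mono: "strict_mono g" using gs by (simp add: strict_mono_Suc_iff)
  have gle: "\<And>n. g n \<le> g (2*n)" "\<And>n. g n \<le> g (2*n+1)"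
    using mono by (auto simp: strict_mono_less_eq)
  obtain b where b: "\<forall>x\<in>range g. x < b"
    using bound_countable[OF unc seg, of "range g"] by auto
  define s where "s = (LEAST b. \<forall>n. g n \<le> b)"
  have bb: "\<forall>n. g n \<le> b" using b by (simp add: less_imp_le)
  have sub: "\<forall>n. g n \<le> s" unfolding s_def
    by (rule LeastI[of "\<lambda>b. \<forall>n. g n \<le> b" b, OF bb])
  have sleast: "\<exists>n. c < g n" if "c < s" for c
  proof (rule ccontr)
    assume "\<not> (\<exists>n. c < g n)"
    then have "\<forall>n. g n \<le> c" by (simp add: not_less)
    then have "s \<le> c" unfolding s_def by (rule Least_le)
    with that show False by simp
  qed
  have snot: "g n < s" for n
  proof -
    have "g (Suc n) \<le> s" using sub by blast
    then show ?thesis by (rule less_le_trans[OF gs])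
  qed
  have key: "s \<in> A" if "closed A" and inA: "\<And>n. g (h n) \<in> A" and hh: "\<And>n. n \<le> h n" for A h
  proof (rule ccontr)
    assume "s \<notin> A"
    then have "open (- A)" "s \<in> - A" using that by auto
    from open_left[OF this snot[of 0]] obtain c where c: "c < s" "{c<..s} \<subseteq> - A" by blast
    from sleast[OF c(1)] obtain n where "c < g n" by blast
    moreover have "g n \<le> g (h n)" using mono hh by (simp add: strict_mono_less_eq)
    ultimately have "g (h n) \<in> {c<..s}" using sub by auto
    with c inA show False by auto
  qed
  have "s \<in> C"
  proof (rule key[OF cC])
    fix n show "g (2*n) \<in> C" using gP[of "2*n"] by (simp add: P_def)
  next
    fix n :: nat show "n \<le> 2*n" by simp
  qed
  moreover have "s \<in> D"
  proof (rule key[OF cD])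
    fix n show "g (2*n+1) \<in> D" using gP[of "2*n+1"] by (simp add: P_def)
  next
    fix n :: nat show "n \<le> 2*n+1" by simp
  qed
  ultimately show False using disj by auto
qed

lemma compact_atMost_wo:
  fixes g :: "'a::{wellorder,linorder_topology}"
  shows "compact {..g}"
proof (rule compactI)
  fix \<C> assume op: "\<forall>t\<in>\<C>. open t" and cov: "{..g} \<subseteq> \<Union>\<C>"
  have "\<forall>x. x \<le> g \<longrightarrow> (\<exists>D. D \<subseteq> \<C> \<and> finite D \<and> {..x} \<subseteq> \<Union>D)"
  proof (intro allI)
    fix x show "x \<le> g \<longrightarrow> (\<exists>D. D \<subseteq> \<C> \<and> finite D \<and> {..x} \<subseteq> \<Union>D)"
    proof (induction x rule: less_induct)
      case (less x)
      show ?case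
      proof
        assume xg: "x \<le> g"
        then obtain U where U: "U \<in> \<C>" "x \<in> U" using cov by auto
        show "\<exists>D. D \<subseteq> \<C> \<and> finite D \<and> {..x} \<subseteq> \<Union>D"
        proof (cases "\<exists>y. y < x")
          case True
          then obtain y where "y < x" by blast
          from open_left[OF _ U(2) this] op U obtain c where c: "c < x" "{c<..x} \<subseteq> U" by auto
          from less[OF c(1)] c xg obtain D where D: "D \<subseteq> \<C>" "finite D" "{..c} \<subseteq> \<Union>D" by auto
          show ?thesis
          proof (intro exI[of _ "insert U D"] conjI)
            show "{..x} \<subseteq> \<Union>(insert U D)"
            proof
              fix z assume "z \<in> {..x}"
              then show "z \<in> \<Union>(insert U D)" using D(3) c(2) by (cases "z \<le> c") auto
            qed
          qed (use D U in auto)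
        next
          case False
          then have "{..x} = {x}" by (auto simp: not_less antisym)
          then show ?thesis using U by (intro exI[of _ "{U}"]) auto
        qed
      qed
    qed
  qed
  then have "\<exists>D. D \<subseteq> \<C> \<and> finite D \<and> {..g} \<subseteq> \<Union>D" by blast
  then show "\<exists>C'\<subseteq>\<C>. finite C' \<and> {..g} \<subseteq> \<Union>C'" by blast
qed

lemma eventually_const:
  fixes f :: "'a::{wellorder,linorder_topology} \<Rightarrow> 'b"
  assumes unc: "uncountable (UNIV :: 'a set)" and seg: "\<And>x::'a. countable {..<x}"
    and reg: "regular_space Y" and t1: "t1_space Y" and sc: "second_countable Y"
    and f: "continuous_map euclidean Y f"
  shows "\<exists>y0 \<beta>. \<forall>x. \<beta> < x \<longrightarrow> f x = y0"
proof -
  obtain \<B> where cB: "countable \<B>" and oB: "\<forall>V\<in>\<B>. openin Y V"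
    and bB0: "\<forall>U x. openin Y U \<and> x \<in> U \<longrightarrow> (\<exists>V\<in>\<B>. x \<in> V \<and> V \<subseteq> U)"
    using sc unfolding second_countable_def by (elim exE conjE) (rule that)
  have bB: "\<exists>V\<in>\<B>. x \<in> V \<and> V \<subseteq> U" if "openin Y U" "x \<in> U" for U x
    using bB0 that by simp
  have fY: "\<And>x. f x \<in> topspace Y" using f by (auto simp: continuous_map_def Pi_iff)
  have "\<exists>y0\<in>topspace Y. \<forall>V. openin Y V \<and> y0 \<in> V \<longrightarrow> (\<forall>x. \<exists>z>x. f z \<in> V)"
  proof (rule ccontr)
    assume nn: "\<not> (\<exists>y0\<in>topspace Y. \<forall>V. openin Y V \<and> y0 \<in> V \<longrightarrow> (\<forall>x. \<exists>z>x. f z \<in> V))"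
    define \<B>' where "\<B>' = {B\<in>\<B>. \<exists>x. \<forall>z>x. f z \<notin> B}"
    have cov: "topspace Y \<subseteq> \<Union>\<B>'"
    proof
      fix y assume y: "y \<in> topspace Y"
      from nn y have "\<exists>V. \<not> (openin Y V \<and> y \<in> V \<longrightarrow> (\<forall>x. \<exists>z>x. f z \<in> V))"
        by (simp only: bex_simps not_all not_ex)
      then obtain V where V0: "openin Y V" "y \<in> V" "\<not> (\<forall>x. \<exists>z>x. f z \<in> V)"
        by (simp only: not_imp) blast
      from V0(3) obtain x where "\<not> (\<exists>z>x. f z \<in> V)" by (simp only: not_all) blast
      then have "\<forall>z>x. f z \<notin> V" by simp
      with V0 have V: "openin Y V" "y \<in> V" "\<forall>z>x. f z \<notin> V" by simp_all
      from bB[OF V(1,2)] obtain B where "B \<in> \<B>" "y \<in> B" "B \<subseteq> V" by blast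
      then show "y \<in> \<Union>\<B>'" using V(3) unfolding \<B>'_def by blast
    qed
    have "\<forall>B\<in>\<B>'. \<exists>x. \<forall>z>x. f z \<notin> B" by (simp add: \<B>'_def)
    from bchoice[OF this] obtain bd where bd: "\<forall>B\<in>\<B>'. \<forall>z>bd B. f z \<notin> B" by blast
    have "countable \<B>'" using cB by (simp add: \<B>'_def)
    then have "countable (bd ` \<B>')" by simp
    from bound_countable[OF unc seg this] obtain b where b: "\<forall>x\<in>bd ` \<B>'. x < b" by blast
    from cov fY[of b] obtain B where B: "B \<in> \<B>'" "f b \<in> B" by blast
    have "bd B < b" using b B(1) by simp
    then have "f b \<notin> B" using bd B(1) by simp
    then show False using B(2) by simp
  qed
  then obtain y0 where y0: "y0 \<in> topspace Y"
    and unb0: "\<forall>V. openin Y V \<and> y0 \<in> V \<longrightarrow> (\<forall>x. \<exists>z>x. f z \<in> V)" by blast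
  have unb: "\<exists>z>x. f z \<in> V" if "openin Y V" "y0 \<in> V" for V x
    using unb0 that by simp
  have tail: "\<exists>\<alpha>. \<forall>z>\<alpha>. f z \<in> W" if W: "openin Y W" "y0 \<in> W" for W
  proof (rule ccontr)
    assume nt: "\<not> (\<exists>\<alpha>. \<forall>z>\<alpha>. f z \<in> W)"
    have "neighbourhood_base_of (closedin Y) Y" using reg by (simp add: neighbourhood_base_of_closedin)
    then have "\<exists>U V. openin Y U \<and> closedin Y V \<and> y0 \<in> U \<and> U \<subseteq> V \<and> V \<subseteq> W"
      using W unfolding neighbourhood_base_of by simp
    then obtain U V where UV: "openin Y U" "closedin Y V" "y0 \<in> U" "U \<subseteq> V" "V \<subseteq> W"
      by (elim exE conjE)
    have cl1: "closed {x. f x \<in> V}"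
      using closedin_continuous_map_preimage[OF f UV(2)] by simp
    have cl2: "closed {x. f x \<in> topspace Y - W}"
      using closedin_continuous_map_preimage[OF f closedin_diff[OF closedin_topspace W(1)]] by simp
    have "{x. f x \<in> V} \<inter> {x. f x \<in> topspace Y - W} \<noteq> {}"
    proof (rule club_meet[OF unc seg cl1 cl2])
      fix x
      obtain z where "z > x" "f z \<in> U" using unb[OF UV(1,3)] by blast
      then show "\<exists>y\<in>{x. f x \<in> V}. x < y" using UV(4) by blast
    next
      fix x
      from nt obtain z where "z > x" "f z \<notin> W" by (auto simp: not_less)
      then show "\<exists>y\<in>{x. f x \<in> topspace Y - W}. x < y" using fY[of z] by blast
    qed
    then show False using UV(5) by blast
  qed
  define \<B>0 where "\<B>0 = {B\<in>\<B>. y0 \<in> B}"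
  have "\<forall>B\<in>\<B>0. \<exists>a. \<forall>z>a. f z \<in> B"
  proof
    fix B assume "B \<in> \<B>0"
    then have "openin Y B" "y0 \<in> B" using oB by (auto simp: \<B>0_def)
    then show "\<exists>a. \<forall>z>a. f z \<in> B" by (rule tail)
  qed
  from bchoice[OF this] obtain tb where tb: "\<forall>B\<in>\<B>0. \<forall>z>tb B. f z \<in> B" by blast
  have "countable \<B>0" using cB by (simp add: \<B>0_def)
  then have "countable (tb ` \<B>0)" by simp
  from bound_countable[OF unc seg this] obtain \<beta> where \<beta>: "\<forall>x\<in>tb ` \<B>0. x < \<beta>" by blast
  have "\<forall>x. \<beta> < x \<longrightarrow> f x = y0"
  proof (intro allI impI)
    fix x assume bx: "\<beta> < x"
    show "f x = y0"
    proof (rule ccontr)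
      assume ne: "f x \<noteq> y0"
      obtain U where U: "openin Y U" "y0 \<in> U" "f x \<notin> U"
        using t1 y0 fY[of x] ne unfolding t1_space_def by metis
      from bB[OF U(1,2)] obtain B where B: "B \<in> \<B>" "y0 \<in> B" "B \<subseteq> U" by blast
      then have B0: "B \<in> \<B>0" by (simp add: \<B>0_def)
      then have "tb B < \<beta>" using \<beta> by simp
      then have "tb B < x" using bx by (rule less_trans)
      then have "f x \<in> B" using tb B0 by simp
      with B(3) U(3) show False by blast
    qed
  qed
  then show ?thesis by blast
qed

theorem mainTheorem3:
  fixes Y :: "'b topology"
  assumes omega1_uncountable: "uncountable (UNIV :: ('a::{wellorder, linorder_topology}) set)"
      and omega1_segments: "\<And>x::'a. countable {..<x}"
      and infinite_Y: "infinite (topspace Y)"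
      and tych: "tychonoff_space Y"
      and weight: "second_countable Y"
      and image: "\<exists>f. continuous_map (euclidean :: 'a topology) Y f \<and> f ` UNIV = topspace Y"
  shows "\<not> homogeneous_space Y"
proof
  assume hom: "homogeneous_space Y"
  obtain f where f: "continuous_map (euclidean :: 'a topology) Y f" and fim: "f ` UNIV = topspace Y"
    using image by (elim exE conjE)
  have cr: "completely_regular_space Y" and t1: "t1_space Y"
    using tych unfolding tychonoff_space_def by simp_all
  have reg: "regular_space Y" using completely_regular_imp_regular_space[OF cr] .
  obtain y0 \<beta> where ec0: "\<forall>x. \<beta> < x \<longrightarrow> f x = y0"
    using eventually_const[OF omega1_uncountable omega1_segments reg t1 weight f] by (elim exE)
  have ec: "f x = y0" if "\<beta> < x" for x using ec0 that by simp
  have "countable {\<beta>}" by simp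
  from bound_countable[OF omega1_uncountable omega1_segments this] obtain \<gamma> where "\<forall>x\<in>{\<beta>}. x < \<gamma>"
    by (elim exE)
  then have bg: "\<beta> < \<gamma>" by simp
  have top: "topspace Y = f ` {..\<gamma>}"
  proof
    show "topspace Y \<subseteq> f ` {..\<gamma>}"
    proof
      fix y assume "y \<in> topspace Y"
      then obtain x where x: "y = f x" using fim by auto
      show "y \<in> f ` {..\<gamma>}"
      proof (cases "x \<le> \<gamma>")
        case True then show ?thesis using x by simp
      next
        case False
        then have gx: "\<gamma> < x" by simp
        have "f x = y0" using ec[OF less_trans[OF bg gx]] .
        moreover have "f \<gamma> = y0" using ec[OF bg] .
        ultimately have "y = f \<gamma>" using x by simp
        then show ?thesis by simp
      qed
    qed
    show "f ` {..\<gamma>} \<subseteq> topspace Y" using fim by auto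
  qed
  have cnt: "countable (topspace Y)"
  proof -
    have "{..\<gamma>} = insert \<gamma> {..<\<gamma>}" by auto
    then have "countable {..\<gamma>}" using omega1_segments[of \<gamma>] by simp
    then show ?thesis using top by simp
  qed
  have "compactin (euclidean :: 'a topology) {..\<gamma>}" using compact_atMost_wo[of \<gamma>] by simp
  from image_compactin[OF this f] have cpt: "compact_space Y"
    unfolding compact_space_def top .
  have "\<exists>z\<in>topspace Y. \<not> openin Y {z}"
  proof (rule ccontr)
    assume "\<not> (\<exists>z\<in>topspace Y. \<not> openin Y {z})"
    then have all: "\<forall>z\<in>topspace Y. openin Y {z}" by simp
    have o: "\<forall>U\<in>(\<lambda>z. {z}) ` topspace Y. openin Y U" using all by simp
    have c: "topspace Y \<subseteq> \<Union>((\<lambda>z. {z}) ` topspace Y)" by auto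
    have H: "\<forall>\<U>. (\<forall>U\<in>\<U>. openin Y U) \<and> topspace Y \<subseteq> \<Union>\<U> \<longrightarrow>
              (\<exists>\<F>. finite \<F> \<and> \<F> \<subseteq> \<U> \<and> topspace Y \<subseteq> \<Union>\<F>)"
      using cpt by (simp add: compact_space_def compactin_def)
    from H[rule_format, OF conjI[OF o c]] obtain \<F> where
      F: "finite \<F>" "\<F> \<subseteq> (\<lambda>z. {z}) ` topspace Y" "topspace Y \<subseteq> \<Union>\<F>"
      by (elim exE conjE)
    have "finite (\<Union>\<F>)"
    proof (rule finite_Union[OF F(1)])
      fix M assume "M \<in> \<F>"
      then show "finite M" using F(2) by auto
    qed
    from finite_subset[OF F(3) this] infinite_Y show False by simp
  qed
  then obtain z where z: "z \<in> topspace Y" "\<not> openin Y {z}" by (elim bexE) 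
  have "\<exists>y\<in>topspace Y. openin Y {y}"
  proof (rule ccontr)
    assume "\<not> (\<exists>y\<in>topspace Y. openin Y {y})"
    then have none: "\<And>y. y \<in> topspace Y \<Longrightarrow> \<not> openin Y {y}" by simp
    let ?G = "(\<lambda>y. topspace Y - {y}) ` topspace Y"
    have "Y closure_of \<Inter>?G = topspace Y"
    proof (rule Baire_category)
      have "locally_compact_space Y" using compact_imp_locally_compact_space[OF cpt] .
      then show "completely_metrizable_space Y \<or> locally_compact_space Y \<and> regular_space Y"
        using reg by simp
      show "countable ?G" using cnt by simp
      fix T assume "T \<in> ?G"
      then obtain a where a: "a \<in> topspace Y" "T = topspace Y - {a}" by auto
      have "closedin Y {a}" using t1 a(1) by (simp add: t1_space_closedin_singleton)
      then have oT: "openin Y T" using a by (simp add: openin_diff)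
      have s1: "T \<subseteq> Y closure_of T" using a by (simp add: closure_of_subset)
      have s2: "Y closure_of T \<subseteq> topspace Y" by (rule closure_of_subset_topspace)
      have "Y closure_of T = topspace Y"
      proof (cases "a \<in> Y closure_of T")
        case True
        show ?thesis
        proof
          show "topspace Y \<subseteq> Y closure_of T"
          proof
            fix w assume "w \<in> topspace Y"
            then show "w \<in> Y closure_of T" using True s1 a(2) by (cases "w = a") auto
          qed
        qed (rule s2)
      next
        case False
        then have "Y closure_of T = T" using s1 s2 a(2) by auto
        then have "closedin Y T" by (simp add: closure_of_eq)
        then have "openin Y (topspace Y - T)" by (simp add: openin_diff)
        moreover have "topspace Y - T = {a}" using a by auto
        ultimately show ?thesis using none[OF a(1)] by simp
      qed
      then show "openin Y T \<and> Y closure_of T = topspace Y" using oT by simp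
    qed
    moreover have "\<Inter>?G = {}" using z(1) by auto
    ultimately show False using z(1) by simp
  qed
  then obtain y where y: "y \<in> topspace Y" "openin Y {y}" by (elim bexE)
  have "\<exists>h. homeomorphic_map Y Y h \<and> h y = z"
    using hom y(1) z(1) unfolding homogeneous_space_def by simp
  then obtain h where h: "homeomorphic_map Y Y h" "h y = z" by (elim exE conjE)
  have "{y} \<subseteq> topspace Y" using y(1) by simp
  from homeomorphic_map_openness[OF h(1) this] y(2) have "openin Y (h ` {y})" by simp
  then show False using h(2) z(2) by simp
qed

end
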